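(* Let $f$ be a DNF with $k$ terms and let $y\in\{0,1\}^n$ satisfy $f_{>\tau}$ and not $f_{\le\tau}$ ($\tau=1000k$). Fix any permutation $\pi$ and let $z_0,z_1,\dots$ be the sweep process started at $y$. Let $i$ be such that $(z_i)_a=y_a$ for all $a\in P(y)$, and let $U_i$ be the set of unanimous indices of $\mathcal{T}_f(z_i)$. If $\mathcal{T}_f(z_i)\setminus(P(y)\cup U_i)$ contains a stripped term of length at most $k$, then $\textsc{GenerateCandidateStem}(f,z_i)$ outputs a valid stem of a term of $f$ satisfied by $y$.
   Context: Terms are sets of literals, a DNF is a set of terms; $|T|$ is the number of literals; $g_{\le L}$ / $g_{>L}$ are the sub-DNFs of terms of length $\le L$ / $>L$. $\mathcal{T}_f(x)$ is the set of terms of $f$ satisfied by $x$. A term $T'$ is a valid stem of a term $T$ if $T'\subseteq T$ and $|T\setminus T'|\le 2k$. Protected set $P(y)$: for each term $T\in f$ not satisfied by $y$, take the literal of $T$ with smallest index not satisfied by $y$; $P(y)$ is the set of these indices. For a term $T$ and $S\subseteq[n]$, the stripped term $T\setminus S$ removes from $T$ all literals $x_i,\overline{x_i}$ with $i\in S$; for a set of terms, stripping is applied to each. Unanimous indices of a set of terms $\mathcal{T}$: all $i$ such that every term of $\mathcal{T}$ contains $x_i$, or every term contains $\overline{x_i}$. $x^{\oplus j}$ is $x$ with bit $j$ flipped. $\textsc{GenerateCandidateStem}(f,x)$: let $I=\{i: f(x^{\oplus i})=0\}$ and output the term $\{x_i:i\in I,x_i=1\}\cup\{\overline{x_i}: i\in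 I, x_i=0\}$. Sweep process: given $y$ with $f(y)=1$ and a permutation $\pi$ listing $[n]$ as $\pi(0),\dots,\pi(n-1)$, $z_0=y$, and $z_{t+1}=z_t^{\oplus\pi(t)}$ if $f(z_t^{\oplus\pi(t)})=1$, else $z_{t+1}=z_t$. *)

theory Defs
  imports Main
begin

text \<open>A literal is a pair (i, b): (i, True) is x_i, (i, False) is the negation of x_i. An assignment in {0,1}^n is
  a function nat => bool (only indices < n are relevant).\<close>

type_synonym lit = "nat \<times> bool"
type_synonym dnf_term = "lit set"
type_synonym dnf = "dnf_term set"
type_synonym assignment = "nat \<Rightarrow> bool"

definition sat_term :: "dnf_term \<Rightarrow> assignment \<Rightarrow> bool" where
  "sat_term T x \<longleftrightarrow> (\<forall>(i, b) \<in> T. x i = b)"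

definition eval_dnf :: "dnf \<Rightarrow> assignment \<Rightarrow> bool" where
  "eval_dnf f x \<longleftrightarrow> (\<exists>T \<in> f. sat_term T x)"

definition short_part :: "dnf \<Rightarrow> nat \<Rightarrow> dnf" where
  "short_part f L = {T \<in> f. card T \<le> L}"

definition long_part :: "dnf \<Rightarrow> nat \<Rightarrow> dnf" where
  "long_part f L = {T \<in> f. card T > L}"

definition sat_terms :: "dnf \<Rightarrow> assignment \<Rightarrow> dnf_term set" where
  "sat_terms f x = {T \<in> f. sat_term T x}"

definition valid_stem :: "nat \<Rightarrow> dnf_term \<Rightarrow> dnf_term \<Rightarrow> bool" where
  "valid_stem k T' T \<longleftrightarrow> T' \<subseteq> T \<and> card (T - T') \<le> 2 * k"

definition protected_set :: "dnf \<Rightarrow> assignment \<Rightarrow> nat set" where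
  "protected_set f y =
     {Min {i. \<exists>b. (i, b) \<in> T \<and> y i \<noteq> b} | T. T \<in> f \<and> \<not> sat_term T y}"

definition strip :: "dnf_term \<Rightarrow> nat set \<Rightarrow> dnf_term" where
  "strip T S = {(i, b) \<in> T. i \<notin> S}"

definition unanimous :: "nat \<Rightarrow> dnf_term set \<Rightarrow> nat set" where
  "unanimous n \<T> = {i. i < n \<and> ((\<forall>T \<in> \<T>. (i, True) \<in> T) \<or> (\<forall>T \<in> \<T>. (i, False) \<in> T))}"

definition flip :: "assignment \<Rightarrow> nat \<Rightarrow> assignment" where
  "flip x j = x(j := \<not> x j)"

definition generate_candidate_stem :: "nat \<Rightarrow> dnf \<Rightarrow> assignment \<Rightarrow> dnf_term" where
  "generate_candidate_stem n f x = {(i, x i) | i. i < n \<and> \<not> eval_dnf f (flip x i)}"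

fun sweep :: "dnf \<Rightarrow> (nat \<Rightarrow> nat) \<Rightarrow> assignment \<Rightarrow> nat \<Rightarrow> assignment" where
  "sweep f \<pi> y 0 = y"
| "sweep f \<pi> y (Suc t) =
     (if eval_dnf f (flip (sweep f \<pi> y t) (\<pi> t)) then flip (sweep f \<pi> y t) (\<pi> t)
      else sweep f \<pi> y t)"

end

theory Submission
  imports Defs
begin

theorem lemma4p11:
  fixes n k :: nat and f :: dnf and y :: assignment and \<pi> :: "nat \<Rightarrow> nat" and i :: nat
  assumes f_fin: "finite f"
    and terms_fin: "\<forall>T \<in> f. finite T"
    and vars: "\<forall>T \<in> f. \<forall>(j, b) \<in> T. j < n"
    and k_def: "card f = k"
    and y_long: "eval_dnf (long_part f (1000 * k)) y"
    and y_short: "\<not> eval_dnf (short_part f (1000 * k)) y"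
    and perm: "bij_betw \<pi> {..<n} {..<n}"
    and i_le: "i \<le> n"
    and prot: "\<forall>a \<in> protected_set f y. sweep f \<pi> y i a = y a"
    and short_stripped: "\<exists>T \<in> sat_terms f (sweep f \<pi> y i).
          card (strip T (protected_set f y \<union> unanimous n (sat_terms f (sweep f \<pi> y i)))) \<le> k"
  shows "\<exists>T \<in> f. sat_term T y \<and> valid_stem k (generate_candidate_stem n f (sweep f \<pi> y i)) T"
proof -
  define z where "z = sweep f \<pi> y i"
  define P where "P = protected_set f y"
  define U where "U = unanimous n (sat_terms f z)"
  define C where "C = generate_candidate_stem n f z"
  define m where "m = (\<lambda>T'::dnf_term. Min {i. \<exists>b. (i, b) \<in> T' \<and> y i \<noteq> b})"
  have zP: "\<And>a. a \<in> P \<Longrightarrow> z a = y a" using prot unfolding z_def P_def by auto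
  have keym: "\<exists>b. (m T', b) \<in> T' \<and> y (m T') \<noteq> b \<and> m T' \<in> P"
    if "T' \<in> f" "\<not> sat_term T' y" for T'
  proof -
    let ?S = "{i. \<exists>b. (i, b) \<in> T' \<and> y i \<noteq> b}"
    have "?S \<subseteq> fst ` T'" by force
    hence fin: "finite ?S" using terms_fin that(1) finite_subset by blast
    have ne: "?S \<noteq> {}" using that(2) unfolding sat_term_def by auto
    have "m T' \<in> ?S" unfolding m_def using Min_in[OF fin ne] .
    moreover have "m T' \<in> P" unfolding P_def protected_set_def m_def using that by blast
    ultimately show ?thesis by blast
  qed
  have A: "sat_term T' y" if Af: "T' \<in> f" and Az: "sat_term T' z" for T'
  proof (rule ccontr)
    assume ns: "\<not> sat_term T' y"
    obtain b where "(m T', b) \<in> T'" "y (m T') \<noteq> b" "m T' \<in> P" using keym[OF Af ns] by blast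
    thus False using zP Az unfolding sat_term_def by fastforce
  qed
  have B: "j \<in> P" if B1: "T' \<in> f" and B2: "\<not> sat_term T' y" and B3: "sat_term T' (flip z j)" for T' j
  proof -
    obtain b where b: "(m T', b) \<in> T'" "y (m T') \<noteq> b" "m T' \<in> P" using keym[OF B1 B2] by blast
    have "flip z j (m T') = b" using b(1) B3 unfolding sat_term_def by fastforce
    hence "m T' = j" using zP[OF b(3)] b(2) unfolding flip_def by (auto split: if_splits)
    thus ?thesis using b(3) by simp
  qed
  obtain T where T: "T \<in> f" "sat_term T z" "card (strip T (P \<union> U)) \<le> k"
    using short_stripped unfolding z_def P_def U_def sat_terms_def by auto
  have Tfin: "finite T" using T terms_fin by blast
  have Tz: "\<And>j b. (j, b) \<in> T \<Longrightarrow> b = z j" using T(2) unfolding sat_term_def by fastforce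
  have Tn: "\<And>j b. (j, b) \<in> T \<Longrightarrow> j < n" using T(1) vars by fastforce
  define W where "W = {j \<in> U. j \<notin> P \<and> j < n \<and> eval_dnf f (flip z j)}"
  have CT: "C \<subseteq> T"
  proof
    fix l assume "l \<in> C"
    then obtain j where l: "l = (j, z j)" "j < n" "\<not> eval_dnf f (flip z j)"
      unfolding C_def generate_candidate_stem_def by auto
    show "l \<in> T"
    proof (rule ccontr)
      assume "l \<notin> T"
      have "sat_term T (flip z j)"
        unfolding sat_term_def flip_def
      proof (intro ballI, clarify)
        fix a b assume ab: "(a, b) \<in> T"
        show "(z(j := \<not> z j)) a = b"
        proof (cases "a = j")
          case True thus ?thesis using ab Tz[OF ab] \<open>l \<notin> T\<close> l(1) by auto
        next
          case False thus ?thesis using Tz[OF ab] by simp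
        qed
      qed
      thus False using l(3) T(1) unfolding eval_dnf_def by blast
    qed
  qed
  have sub: "T - C \<subseteq> strip T (P \<union> U) \<union> (\<lambda>j. (j, z j)) ` (P \<union> W)"
  proof
    fix l assume l: "l \<in> T - C"
    obtain j b where jb: "l = (j, b)" by force
    have b: "b = z j" using Tz l jb by blast
    have jn: "j < n" using Tn l jb by blast
    have ev: "eval_dnf f (flip z j)"
      using l jb b jn unfolding C_def generate_candidate_stem_def by auto
    show "l \<in> strip T (P \<union> U) \<union> (\<lambda>j. (j, z j)) ` (P \<union> W)"
    proof (cases "j \<in> P \<union> U")
      case False thus ?thesis using l jb unfolding strip_def by auto
    next
      case True
      hence "j \<in> P \<union> W" unfolding W_def using jn ev by auto
      thus ?thesis using jb b by auto
    qed
  qed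
  define UY where "UY = {T' \<in> f. \<not> sat_term T' y}"
  define SY where "SY = {T' \<in> f. sat_term T' y \<and> \<not> sat_term T' z}"
  have PUY: "P = m ` UY" unfolding P_def protected_set_def m_def UY_def by blast
  have finUY: "finite UY" "finite SY" using f_fin unfolding UY_def SY_def by auto
  have finP: "finite P" using PUY finUY by simp
  have cP: "card P \<le> card UY" using PUY card_image_le finUY by simp
  have finW: "finite W" unfolding W_def by (rule finite_subset[of _ "{..<n}"]) auto
  define g where "g = (\<lambda>j. SOME T'. T' \<in> f \<and> sat_term T' (flip z j))"
  have gW: "g j \<in> f \<and> sat_term (g j) (flip z j)" if "j \<in> W" for j
  proof -
    have "\<exists>T'. T' \<in> f \<and> sat_term T' (flip z j)" using that unfolding W_def eval_dnf_def by blast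
    thus ?thesis unfolding g_def by (rule someI_ex)
  qed
  have gnz: "\<not> sat_term (g j) z" if "j \<in> W" for j
  proof
    assume s: "sat_term (g j) z"
    hence "g j \<in> sat_terms f z" using gW[OF that] unfolding sat_terms_def by auto
    hence "(j, True) \<in> g j \<or> (j, False) \<in> g j"
      using that unfolding W_def U_def unanimous_def by blast
    then obtain b where "(j, b) \<in> g j" by blast
    hence "z j = b" "flip z j j = b" using s gW[OF that] unfolding sat_term_def by fastforce+
    thus False unfolding flip_def by simp
  qed
  have gSY: "g ` W \<subseteq> SY"
  proof
    fix T' assume "T' \<in> g ` W"
    then obtain j where j: "j \<in> W" "T' = g j" by blast
    have "sat_term T' y"
    proof (rule ccontr)
      assume "\<not> sat_term T' y"
      hence "j \<in> P" using B[of T' j] gW[OF j(1)] j(2) by blast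
      thus False using j(1) unfolding W_def by blast
    qed
    thus "T' \<in> SY" unfolding SY_def using gW[OF j(1)] gnz[OF j(1)] j(2) by blast
  qed
  have ginj: "inj_on g W"
  proof
    fix j j' assume jj: "j \<in> W" "j' \<in> W" "g j = g j'"
    have "\<not> sat_term (g j) z" using gnz jj by blast
    then obtain a b where ab: "(a, b) \<in> g j" "z a \<noteq> b" unfolding sat_term_def by auto
    have "flip z j a = b" using ab(1) gW[OF jj(1)] unfolding sat_term_def by fastforce
    hence "a = j" using ab(2) unfolding flip_def by (auto split: if_splits)
    have "flip z j' a = b" using ab(1) gW[OF jj(2)] jj(3) unfolding sat_term_def by fastforce
    hence "a = j'" using ab(2) unfolding flip_def by (auto split: if_splits)
    thus "j = j'" using \<open>a = j\<close> by simp
  qed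
  have cW: "card W \<le> card SY" using card_inj_on_le[OF ginj gSY finUY(2)] .
  have "card UY + card SY = card (UY \<union> SY)"
    using finUY by (subst card_Un_disjoint) (auto simp: UY_def SY_def)
  also have "\<dots> \<le> card f" using f_fin by (intro card_mono) (auto simp: UY_def SY_def)
  finally have cPW: "card P + card W \<le> k" using cP cW k_def by linarith
  have "card (T - C) \<le> card (strip T (P \<union> U) \<union> (\<lambda>j. (j, z j)) ` (P \<union> W))"
    proof (rule card_mono)
    have "strip T (P \<union> U) \<subseteq> T" unfolding strip_def by auto
    thus "finite (strip T (P \<union> U) \<union> (\<lambda>j. (j, z j)) ` (P \<union> W))"
      using Tfin finP finW finite_subset by blast
  qed (rule sub)
  also have "\<dots> \<le> card (strip T (P \<union> U)) + card ((\<lambda>j. (j, z j)) ` (P \<union> W))"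
    by (rule card_Un_le)
  also have "card ((\<lambda>j. (j, z j)) ` (P \<union> W)) \<le> card (P \<union> W)" by (rule card_image_le) (use finP finW in auto)
  also have "card (P \<union> W) \<le> card P + card W" by (rule card_Un_le)
  finally have "card (T - C) \<le> 2 * k" using T(3) cPW by linarith
  thus ?thesis using T(1) A[OF T(1) T(2)] CT unfolding valid_stem_def C_def z_def by blast
qed

end
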